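(* Let $PS$ be a finite set of propositional symbols and let $W = \{\langle \phi_1, k_1\rangle, \ldots, \langle \phi_n, k_n\rangle\}$ be a weighted base over $PS$. Let ${\it holds}_1, \ldots, {\it holds}_n$ be pairwise distinct symbols of $PS \setminus Var(W)$. Define $H = \{\langle \phi_i, +\infty\rangle \mid \langle \phi_i, +\infty\rangle \in W\}$ and $S = \{\langle {\it holds}_i \Rightarrow \phi_i, +\infty\rangle, \langle {\it holds}_i, k_i\rangle \mid \langle \phi_i, k_i\rangle \in W,\ k_i \neq +\infty\}$, and let $W{\downarrow} = H \cup S$. Then $W{\downarrow}$ is a weighted base in normal form. Moreover, $K_W(\alpha) = K_{W{\downarrow}}(\alpha)$ for every formula $\alpha \in PROP_{Var(W)}$, and hence $W{\downarrow}$ is $Var(W)$-equivalent to $W$.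
   Context: $PROP_{V}$ denotes the propositional formulas built from symbols in $V$, the constants $true,false$ and $\neg,\wedge,\vee$; $Var(\phi)$ is the set of symbols occurring in $\phi$. Worlds are the interpretations $\omega \in \Omega = 2^{PS}$. A weighted base is a finite set $W=\{\langle \phi_1,k_1\rangle,\ldots,\langle\phi_n,k_n\rangle\}$ where each $\phi_i\in PROP_{PS}$ and each weight $k_i$ is a positive integer or $+\infty$; $Var(W)=\bigcup_i Var(\phi_i)$. The weight of a world is $K_W(\omega)=\sum_{\langle\phi_i,k_i\rangle\in W,\ \omega\models\neg\phi_i} k_i$, and for a formula $\alpha$, $K_W(\alpha)=\min_{\omega\models\alpha}K_W(\omega)$. Skeptical inference: $\alpha \mid\!\sim_W \beta$ iff every world of minimal $K_W$-weight among the models of $\alpha$ is a model of $\beta$. $W$ is in normal form iff for every $i$, either $k_i=+\infty$ or $\phi_i$ is a propositional symbol. For $V\subseteq PS$, two weighted bases $W_1,W_2$ are $V$-equivalent iff for all $\alpha,\beta\in PROP_V$, $\alpha\mid\!\sim_{W_1}\beta$ holds exactly when $\alpha\mid\!\sim_{W_2}\beta$ holds. *)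

theory Defs
  imports "HOL-Library.Extended_Nat"
begin

datatype 'v form = Atom 'v | TT | FF | Neg "'v form" | Conj "'v form" "'v form" | Disj "'v form" "'v form"

fun Var :: "'v form \<Rightarrow> 'v set" where
  "Var (Atom p) = {p}"
| "Var TT = {}"
| "Var FF = {}"
| "Var (Neg f) = Var f"
| "Var (Conj f g) = Var f \<union> Var g"
| "Var (Disj f g) = Var f \<union> Var g"

definition Imp :: "'v form \<Rightarrow> 'v form \<Rightarrow> 'v form" where
  "Imp f g = Disj (Neg f) g"

text \<open>A world (interpretation) is represented by the set of symbols it makes true.\<close>
fun sat :: "'v set \<Rightarrow> 'v form \<Rightarrow> bool" where
  "sat w (Atom p) = (p \<in> w)"
| "sat w TT = True"
| "sat w FF = False"
| "sat w (Neg f) = (\<not> sat w f)"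
| "sat w (Conj f g) = (sat w f \<and> sat w g)"
| "sat w (Disj f g) = (sat w f \<or> sat w g)"

text \<open>Weights: positive integers or infinity, i.e. nonzero elements of enat.\<close>
type_synonym 'v wbase = "('v form \<times> enat) set"

definition weighted_base :: "'v set \<Rightarrow> 'v wbase \<Rightarrow> bool" where
  "weighted_base PS W \<longleftrightarrow> finite W \<and> (\<forall>(f, k) \<in> W. Var f \<subseteq> PS \<and> k \<noteq> 0)"

definition VarW :: "'v wbase \<Rightarrow> 'v set" where
  "VarW W = (\<Union>(f, k) \<in> W. Var f)"

definition normal_form :: "'v wbase \<Rightarrow> bool" where
  "normal_form W \<longleftrightarrow> (\<forall>(f, k) \<in> W. k = \<infinity> \<or> (\<exists>p. f = Atom p))"

definition worlds :: "'v set \<Rightarrow> 'v set set" where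
  "worlds PS = Pow PS"

definition Kw :: "'v wbase \<Rightarrow> 'v set \<Rightarrow> enat" where
  "Kw W w = (\<Sum>(f, k) \<in> W. if sat w f then 0 else k)"

text \<open>Weight of a formula: minimum over its models (infinity if it has none).\<close>
definition Kf :: "'v set \<Rightarrow> 'v wbase \<Rightarrow> 'v form \<Rightarrow> enat" where
  "Kf PS W a = (INF w \<in> {w \<in> worlds PS. sat w a}. Kw W w)"

definition infers :: "'v set \<Rightarrow> 'v wbase \<Rightarrow> 'v form \<Rightarrow> 'v form \<Rightarrow> bool" where
  "infers PS W a b \<longleftrightarrow>
     (\<forall>w \<in> worlds PS. sat w a \<and> Kw W w = Kf PS W a \<longrightarrow> sat w b)"

definition V_equivalent :: "'v set \<Rightarrow> 'v set \<Rightarrow> 'v wbase \<Rightarrow> 'v wbase \<Rightarrow> bool" where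
  "V_equivalent PS V W1 W2 \<longleftrightarrow>
     (\<forall>a b. Var a \<subseteq> V \<and> Var b \<subseteq> V \<longrightarrow> (infers PS W1 a b \<longleftrightarrow> infers PS W2 a b))"

end

theory Submission
  imports Defs
begin

lemma sat_agree: "Var f \<subseteq> V \<Longrightarrow> w \<inter> V = w' \<inter> V \<Longrightarrow> sat w f = sat w' f"
  by (induction f) auto

theorem proposition3p1:
  fixes PS :: "'v set" and n :: nat and phi :: "nat \<Rightarrow> 'v form" and k :: "nat \<Rightarrow> enat"
    and holds :: "nat \<Rightarrow> 'v" and W Wd :: "'v wbase"
  assumes "finite PS"
    and W_def: "W = (\<lambda>i. (phi i, k i)) ` {..<n}"
    and "inj_on (\<lambda>i. (phi i, k i)) {..<n}"
    and "weighted_base PS W"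
    and "inj_on holds {..<n}"
    and "\<forall>i<n. holds i \<in> PS - VarW W"
    and Wd_def: "Wd = {(phi i, \<infinity>) | i. i < n \<and> k i = \<infinity>}
              \<union> ({(Imp (Atom (holds i)) (phi i), \<infinity>) | i. i < n \<and> k i \<noteq> \<infinity>}
                 \<union> {(Atom (holds i), k i) | i. i < n \<and> k i \<noteq> \<infinity>})"
  shows "weighted_base PS Wd \<and> normal_form Wd
       \<and> (\<forall>a. Var a \<subseteq> VarW W \<longrightarrow> Kf PS W a = Kf PS Wd a)
       \<and> V_equivalent PS (VarW W) Wd W"
proof -
  note inj1 = assms(3) and wb = assms(4) and injh = assms(5) and hs = assms(6)
  define Hs where "Hs = holds ` {..<n}"
  have VarW_phi: "\<And>i. i<n \<Longrightarrow> Var (phi i) \<subseteq> VarW W"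
    unfolding VarW_def W_def by auto
  have phiPS: "\<And>i. i<n \<Longrightarrow> Var (phi i) \<subseteq> PS" and k0: "\<And>i. i<n \<Longrightarrow> k i \<noteq> 0"
    using wb unfolding weighted_base_def W_def by auto
  have HsV: "Hs \<inter> VarW W = {}" using hs unfolding Hs_def by auto
  have hnot: "\<And>i j. i<n \<Longrightarrow> j<n \<Longrightarrow> holds i \<notin> Var (phi j)"
    using hs VarW_phi by blast
  have agree: "\<And>w w' f. Var f \<subseteq> VarW W \<Longrightarrow> w - Hs = w' - Hs \<Longrightarrow> sat w f = sat w' f"
  proof -
    fix w w' f assume a: "Var f \<subseteq> VarW W" "w - Hs = w' - Hs"
    have "w \<inter> Var f = w' \<inter> Var f" using a HsV by blast
    then show "sat w f = sat w' f" using sat_agree[of f "Var f" w w'] by simp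
  qed
  define cW where "cW w i = (if sat w (phi i) then 0 else k i)" for w i
  define cD where "cD w i = (if k i = \<infinity> then (if sat w (phi i) then 0 else \<infinity>)
     else (if sat w (Imp (Atom (holds i)) (phi i)) then 0 else \<infinity>) + (if holds i \<in> w then 0 else k i))" for w i
  have KwW: "Kw W w = (\<Sum>i<n. cW w i)" for w
    unfolding Kw_def W_def cW_def by (simp add: sum.reindex[OF inj1])
  define A where "A = (\<lambda>i. (phi i, \<infinity>::enat)) ` {i. i<n \<and> k i = \<infinity>}"
  define B where "B = (\<lambda>i. (Imp (Atom (holds i)) (phi i), \<infinity>::enat)) ` {i. i<n \<and> k i \<noteq> \<infinity>}"
  define C where "C = (\<lambda>i. (Atom (holds i), k i)) ` {i. i<n \<and> k i \<noteq> \<infinity>}"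
  have WdABC: "Wd = A \<union> (B \<union> C)" unfolding Wd_def A_def B_def C_def by blast
  have injA: "inj_on (\<lambda>i. (phi i, \<infinity>::enat)) {i. i<n \<and> k i = \<infinity>}"
  proof (rule inj_onI)
    fix i j assume "i \<in> {i. i<n \<and> k i = \<infinity>}" "j \<in> {i. i<n \<and> k i = \<infinity>}" "(phi i, \<infinity>::enat) = (phi j, \<infinity>)"
    then show "i = j" using inj1 unfolding inj_on_def by auto
  qed
  have injB: "inj_on (\<lambda>i. (Imp (Atom (holds i)) (phi i), \<infinity>::enat)) {i. i<n \<and> k i \<noteq> \<infinity>}"
    using injh unfolding inj_on_def Imp_def by auto
  have injC: "inj_on (\<lambda>i. (Atom (holds i), k i)) {i. i<n \<and> k i \<noteq> \<infinity>}"
    using injh unfolding inj_on_def by auto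
  have dAB: "A \<inter> (B \<union> C) = {}"
  proof -
    have "phi j \<noteq> Imp (Atom (holds i)) (phi i)" if "i<n" "j<n" for i j
      using hnot[OF that] unfolding Imp_def by auto
    then show ?thesis unfolding A_def B_def C_def by auto
  qed
  have dBC: "B \<inter> C = {}" unfolding B_def C_def Imp_def by auto
  have fin: "finite A" "finite B" "finite C" unfolding A_def B_def C_def by auto
  have KwWd: "Kw Wd w = (\<Sum>i<n. cD w i)" for w
  proof -
    let ?g = "\<lambda>(f, k). if sat w f then 0 else (k::enat)"
    have "Kw Wd w = sum ?g A + (sum ?g B + sum ?g C)"
      unfolding Kw_def WdABC using fin dAB dBC
      by (simp add: sum.union_disjoint)
    also have "sum ?g A = (\<Sum>i\<in>{i. i<n \<and> k i = \<infinity>}. if sat w (phi i) then 0 else \<infinity>)"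
      unfolding A_def by (subst sum.reindex[OF injA]) (simp add: comp_def)
    also have "sum ?g B = (\<Sum>i\<in>{i. i<n \<and> k i \<noteq> \<infinity>}. if sat w (Imp (Atom (holds i)) (phi i)) then 0 else \<infinity>)"
      unfolding B_def by (subst sum.reindex[OF injB]) (simp add: comp_def)
    also have "sum ?g C = (\<Sum>i\<in>{i. i<n \<and> k i \<noteq> \<infinity>}. if holds i \<in> w then 0 else k i)"
      unfolding C_def by (subst sum.reindex[OF injC]) (simp add: comp_def)
    also have "(\<Sum>i<n. cD w i) = (\<Sum>i\<in>{..<n} \<inter> {i. k i = \<infinity>}. if sat w (phi i) then 0 else \<infinity>)
        + (\<Sum>i\<in>{..<n} \<inter> - {i. k i = \<infinity>}. (if sat w (Imp (Atom (holds i)) (phi i)) then 0 else \<infinity>) + (if holds i \<in> w then 0 else k i))"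
      unfolding cD_def by (rule sum.If_cases) simp
    moreover have "{..<n} \<inter> {i. k i = \<infinity>} = {i. i<n \<and> k i = \<infinity>}" "{..<n} \<inter> - {i. k i = \<infinity>} = {i. i<n \<and> k i \<noteq> \<infinity>}"
      by auto
    ultimately show ?thesis by (simp add: sum.distrib)
  qed
  have L1: "Kw W w \<le> Kw Wd w" for w
    unfolding KwW KwWd
  proof (rule sum_mono)
    fix i assume "i \<in> {..<n}"
    show "cW w i \<le> cD w i" unfolding cW_def cD_def Imp_def by auto
  qed
  have L2: "\<exists>w'\<in>worlds PS. w' - Hs = w - Hs \<and> Kw Wd w' = Kw W w" if "w \<in> worlds PS" for w
  proof -
    define w' where "w' = (w - Hs) \<union> holds ` {i. i<n \<and> sat w (phi i)}"
    have w'w: "w' - Hs = w - Hs" unfolding w'_def Hs_def by auto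
    have "w' \<in> worlds PS" using that hs unfolding w'_def worlds_def by auto
    moreover have "cD w' i = cW w i" if "i<n" for i
    proof -
      have sp: "sat w' (phi i) = sat w (phi i)" using agree[OF VarW_phi[OF that] w'w] .
      have hi: "holds i \<in> w' \<longleftrightarrow> sat w (phi i)"
        using that injh unfolding w'_def Hs_def inj_on_def by auto
      show ?thesis unfolding cD_def cW_def Imp_def using sp hi by auto
    qed
    then have "Kw Wd w' = Kw W w" unfolding KwW KwWd by (intro sum.cong) auto
    ultimately show ?thesis using w'w by blast
  qed
  have KfEq: "Kf PS W a = Kf PS Wd a" if "Var a \<subseteq> VarW W" for a
  proof (rule antisym)
    show "Kf PS W a \<le> Kf PS Wd a" unfolding Kf_def
      by (rule INF_mono) (use L1 in blast)
    show "Kf PS Wd a \<le> Kf PS W a" unfolding Kf_def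
    proof (rule INF_mono)
      fix w assume "w \<in> {w \<in> worlds PS. sat w a}"
      then obtain w' where "w' \<in> worlds PS" "w' - Hs = w - Hs" "Kw Wd w' = Kw W w" "sat w a"
        using L2 by blast
      moreover have "sat w' a" using agree[OF that \<open>w' - Hs = w - Hs\<close>] \<open>sat w a\<close> by simp
      ultimately show "\<exists>w'\<in>{w \<in> worlds PS. sat w a}. Kw Wd w' \<le> Kw W w" by auto
    qed
  qed
  have VE: "V_equivalent PS (VarW W) Wd W"
    unfolding V_equivalent_def
  proof (intro allI impI)
    fix a b assume ab: "Var a \<subseteq> VarW W \<and> Var b \<subseteq> VarW W"
    have eq: "Kf PS W a = Kf PS Wd a" using KfEq ab by blast
    show "infers PS Wd a b \<longleftrightarrow> infers PS W a b"
    proof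
      assume I: "infers PS Wd a b"
      show "infers PS W a b" unfolding infers_def
      proof (intro ballI impI)
        fix w assume w: "w \<in> worlds PS" "sat w a \<and> Kw W w = Kf PS W a"
        obtain w' where w': "w' \<in> worlds PS" "w' - Hs = w - Hs" "Kw Wd w' = Kw W w"
          using L2[OF w(1)] by blast
        have "sat w' a" using agree[of a w' w] ab w' w by simp
        then have "sat w' b" using I w' w eq unfolding infers_def by auto
        then show "sat w b" using agree[of b w' w] ab w' by simp
      qed
    next
      assume I: "infers PS W a b"
      show "infers PS Wd a b" unfolding infers_def
      proof (intro ballI impI)
        fix w assume w: "w \<in> worlds PS" "sat w a \<and> Kw Wd w = Kf PS Wd a"
        have "Kf PS W a \<le> Kw W w" unfolding Kf_def using w by (intro INF_lower) auto
        then have "Kw W w = Kf PS W a" using L1[of w] w eq by auto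
        then show "sat w b" using I w unfolding infers_def by auto
      qed
    qed
  qed
  have WB: "weighted_base PS Wd"
  proof -
    have "finite Wd" using fin WdABC by simp
    moreover have "\<forall>(f, k) \<in> Wd. Var f \<subseteq> PS \<and> k \<noteq> 0"
      unfolding Wd_def Imp_def using phiPS k0 hs by (auto; blast)
    ultimately show ?thesis unfolding weighted_base_def by blast
  qed
  have NF: "normal_form Wd" unfolding normal_form_def Wd_def by auto
  show ?thesis using WB NF KfEq VE by blast
qed

end
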